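(* Let $D\subset\mathbb R^n$ be a domain, $\mathcal D=(0,1)\times D$, $|c|<(n+1)\pi/2$, and suppose $u\in\mathcal F_c(\mathcal D)$. Then for each $t_0\in(0,1)$ the function $u(t_0,\cdot)$ belongs to $F_{c-\pi/2}(D)$.
   Context: $F_c=\{A\in\mathrm{Sym}(\mathbb R^n):\mathrm{tr}\tan^{-1}(A)\ge c\}$ ($\tan^{-1}\in(-\pi/2,\pi/2)$ via eigenvalues). For $A\in\mathrm{Sym}(\mathbb R^{n+1})$ (indices $0..n$, $t$ the $0$-th coordinate), $A^+$ is the lower right $n\times n$ block, $I_n=\mathrm{diag}(0,1,\dots,1)$, $\mathcal S=\{A=\mathrm{diag}(0,A^+)\}$, $\arg\in(-\pi,\pi]$; $\widetilde\Theta(A)=\sum_{\lambda\in\mathrm{spec}(I_n+\sqrt{-1}A)}m(\lambda)\arg\lambda$ for $A\notin\mathcal S$ (algebraic multiplicities), $\widetilde\Theta(A)=\pi/2+\mathrm{tr}\tan^{-1}(A^+)$ for $A\in\mathcal S$; $\mathcal F_c=\{A:\widetilde\Theta(A)\ge c\}$. For $F\subset\mathrm{Sym}(\mathbb R^m)$ with dual $\widetilde F=\mathrm{Sym}(\mathbb R^m)\setminus(-\mathrm{Int}F)$ and open $X$: upper semicontinuous $u$ is subaffine if for all compact $K\subset X$ and affine $a$, $u\le a$ on $\partial K$ implies $u\le a$ on $K$; $u\in F(X)$ if $u$ is upper semicontinuous and $u+v$ is subaffine for every $v\in C^2(X)$ with $\nabla^2v\in\widetilde F$ everywhere. *)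

theory Defs
  imports "HOL-Analysis.Analysis" "HOL-Computational_Algebra.Polynomial"
          "HOL-Library.Extended_Real"
begin

definition Sym :: "(real^'m^'m) set" where
  "Sym = {A. transpose A = A}"

definition char_poly_c :: "complex^'m^'m \<Rightarrow> complex poly" where
  "char_poly_c M = det (\<chi> i j. (if i = j then [:0, 1:] else 0) - [:M $ i $ j:])"

definition eigvals_c :: "complex^'m^'m \<Rightarrow> complex multiset" where
  "eigvals_c M = proots (char_poly_c M)"

definition cmat :: "real^'m^'m \<Rightarrow> complex^'m^'m" where
  "cmat A = (\<chi> i j. complex_of_real (A $ i $ j))"

text \<open>tr arctan(A) = sum of arctan of the (real) eigenvalues of symmetric A.\<close>
definition tr_arctan :: "real^'m^'m \<Rightarrow> real" where
  "tr_arctan A = sum_mset (image_mset (\<lambda>z. arctan (Re z)) (eigvals_c (cmat A)))"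

definition Fc :: "real \<Rightarrow> (real^'m^'m) set" where
  "Fc c = {A \<in> Sym. tr_arctan A \<ge> c}"

section \<open>The parabolic (n+1)-dimensional objects; index None is the t-coordinate 0\<close>

definition Aplus :: "real^('n::finite option)^('n::finite option) \<Rightarrow> real^'n^'n" where
  "Aplus A = (\<chi> i j. A $ Some i $ Some j)"

definition In_mat :: "real^('n::finite option)^('n::finite option)" where
  "In_mat = (\<chi> i j. if i = j \<and> i \<noteq> None then 1 else 0)"

definition S_set :: "(real^('n::finite option)^('n::finite option)) set" where
  "S_set = {A \<in> Sym. \<forall>i j. (i = None \<or> j = None) \<longrightarrow> A $ i $ j = 0}"

definition Theta_tilde :: "real^('n::finite option)^('n::finite option) \<Rightarrow> real" where
  "Theta_tilde A =
     (if A \<in> S_set then pi / 2 + tr_arctan (Aplus A)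
      else sum_mset (image_mset Arg
             (eigvals_c (\<chi> i j. complex_of_real (In_mat $ i $ j) + \<i> * complex_of_real (A $ i $ j)))))"

definition Fpar :: "real \<Rightarrow> (real^('n::finite option)^('n::finite option)) set" where
  "Fpar c = {A \<in> Sym. Theta_tilde A \<ge> c}"

definition dual_set :: "(real^'m^'m) set \<Rightarrow> (real^'m^'m) set" where
  "dual_set F = Sym - uminus ` ((top_of_set Sym) interior_of F)"

definition usc_on :: "(real^'m) set \<Rightarrow> (real^'m \<Rightarrow> ereal) \<Rightarrow> bool" where
  "usc_on X u \<longleftrightarrow> (\<forall>x\<in>X. \<forall>c. u x < c \<longrightarrow> (\<forall>\<^sub>F y in at x within X. u y < c))"

definition affine_fun :: "(real^'m \<Rightarrow> real) \<Rightarrow> bool" where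
  "affine_fun a \<longleftrightarrow> (\<exists>b c. \<forall>x. a x = b \<bullet> x + c)"

definition subaffine :: "(real^'m) set \<Rightarrow> (real^'m \<Rightarrow> ereal) \<Rightarrow> bool" where
  "subaffine X u \<longleftrightarrow> usc_on X u \<and>
     (\<forall>K a. compact K \<and> K \<subseteq> X \<and> affine_fun a \<and>
        (\<forall>x\<in>frontier K. u x \<le> ereal (a x)) \<longrightarrow> (\<forall>x\<in>K. u x \<le> ereal (a x)))"

definition C2_hess :: "(real^'m) set \<Rightarrow> (real^'m \<Rightarrow> real) \<Rightarrow> (real^'m \<Rightarrow> real^'m^'m) \<Rightarrow> bool" where
  "C2_hess X v H \<longleftrightarrow> (\<exists>g. (\<forall>x\<in>X. (v has_derivative (\<lambda>h. g x \<bullet> h)) (at x)) \<and>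
       (\<forall>x\<in>X. (g has_derivative (\<lambda>h. H x *v h)) (at x)) \<and> continuous_on X H)"

definition F_class :: "(real^'m^'m) set \<Rightarrow> (real^'m) set \<Rightarrow> (real^'m \<Rightarrow> ereal) set" where
  "F_class F X = {u. (\<forall>x\<in>X. u x < \<infinity>) \<and> usc_on X u \<and>
      (\<forall>v H. C2_hess X v H \<and> (\<forall>x\<in>X. H x \<in> dual_set F) \<longrightarrow>
             subaffine X (\<lambda>x. u x + ereal (v x)))}"

end

theory Submission
  imports Defs "HOL-Computational_Algebra.Fundamental_Theorem_Algebra"
begin


lemma sum_option_UNIV: "sum f (UNIV :: 'a::finite option set) = f None + (\<Sum>i\<in>UNIV. f (Some i))"
proof -
  have "sum f (UNIV :: 'a option set) = sum f (insert None (range Some))"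
    by (simp add: UNIV_option_conv)
  also have "\<dots> = f None + sum f (range Some)"
    by (subst sum.insert) auto
  also have "sum f (range Some) = (\<Sum>i\<in>UNIV. f (Some i))"
    by (subst sum.reindex) auto
  finally show ?thesis .
qed

lemma prod_option_UNIV: "prod f (UNIV :: 'a::finite option set) = f None * (\<Prod>i\<in>UNIV. f (Some i))"
proof -
  have "prod f (UNIV :: 'a option set) = prod f (insert None (range Some))"
    by (simp add: UNIV_option_conv)
  also have "\<dots> = f None * prod f (range Some)"
    by (subst prod.insert) auto
  also have "prod f (range Some) = (\<Prod>i\<in>UNIV. f (Some i))"
    by (subst prod.reindex) auto
  finally show ?thesis .
qed

lemma det_poly_eval:
  fixes A :: "'a::comm_ring_1 poly^'n^'n"
  shows "poly (det A) z = det (\<chi> i j. poly (A$i$j) z)"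
  unfolding det_def by (simp add: poly_sum poly_prod)

lemma pcompose_of_int: "pcompose (of_int k) q = of_int k"
  by (simp add: of_int_poly)

lemma det_pcompose:
  fixes A :: "'a::{comm_ring_1} poly^'n^'n"
  shows "pcompose (det A) q = det (\<chi> i j. pcompose (A$i$j) q)"
  unfolding det_def by (simp add: pcompose_sum pcompose_mult pcompose_prod pcompose_of_int)

lemma det_scale_entries:
  fixes A :: "'a::comm_ring_1^'n^'n"
  shows "det (\<chi> i j. c * A$i$j) = c ^ CARD('n) * det A"
  unfolding det_def by (simp add: sum_distrib_left prod.distrib algebra_simps)

lemma det_block_None:
  fixes M :: "'a::comm_ring_1^('n::finite option)^('n option)"
  assumes "\<And>k. k \<noteq> None \<Longrightarrow> M $ None $ k = 0"
  shows "det M = M $ None $ None * det (\<chi> i j. M $ Some i $ Some j)"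
proof -
  let ?S = "{p. p permutes (UNIV :: 'n option set)}"
  let ?S' = "{p. p permutes (range (Some :: 'n \<Rightarrow> 'n option))}"
  let ?f = "\<lambda>p. of_int (sign p) * (\<Prod>i\<in>UNIV. M $ i $ p i)"
  have "det M = sum ?f ?S" unfolding det_def ..
  also have "\<dots> = sum ?f ?S'"
  proof (rule sum.mono_neutral_right)
    show "finite ?S" by (simp add: finite_permutations)
    show "?S' \<subseteq> ?S" using permutes_subset by blast
    show "\<forall>p\<in>?S - ?S'. ?f p = 0"
    proof
      fix p assume p: "p \<in> ?S - ?S'"
      have "p None \<noteq> None"
      proof
        assume h: "p None = None"
        have "p permutes range Some"
          unfolding permutes_def
        proof (intro conjI allI impI)
          fix x :: "'n option" assume "x \<notin> range Some" then show "p x = x" using h by (cases x) auto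
        next
          fix y show "\<exists>!x. p x = y" using p by (auto simp: permutes_def)
        qed
        with p show False by auto
      qed
      then have "M $ None $ p None = 0" using assms by auto
      then show "?f p = 0" by (simp add: prod_option_UNIV)
    qed
  qed
  also have "\<dots> = sum (\<lambda>q. ?f (map_permutation UNIV Some q)) {q. q permutes (UNIV :: 'n set)}"
  proof (rule sym, rule sum.reindex_bij_witness[where i = "map_permutation (range (Some :: 'n \<Rightarrow> 'n option)) the"
        and j = "map_permutation (UNIV :: 'n set) Some"])
    have bS: "bij_betw Some (UNIV::'n set) (range Some)" by (simp add: bij_betw_def)
    have bt: "bij_betw the (range (Some :: 'n \<Rightarrow> 'n option)) UNIV"
      by (rule bij_betw_byWitness[where f'=Some]) auto
    fix a assume "a \<in> ?S'"
    then have a: "a permutes range Some" by simp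
    show "map_permutation UNIV Some (map_permutation (range Some) the a) = a"
      by (rule map_permutation_compose_inv[OF bt a]) auto
    show "map_permutation (range Some) the a \<in> {q. q permutes UNIV}"
      using map_permutation_permutes[OF bt a] by simp
  next
    have bS: "bij_betw Some (UNIV::'n set) (range Some)" by (simp add: bij_betw_def)
    fix b assume "b \<in> {q. q permutes (UNIV :: 'n set)}"
    then have b: "b permutes UNIV" by simp
    show "map_permutation (range Some) the (map_permutation UNIV Some b) = b"
      by (rule map_permutation_compose_inv[OF bS b]) auto
    show "map_permutation UNIV Some b \<in> ?S'"
      using map_permutation_permutes[OF bS b] by simp
    show "?f (map_permutation UNIV Some b) = ?f (map_permutation UNIV Some b)" ..
  qed
  also have "\<dots> = sum (\<lambda>q. M $ None $ None * (of_int (sign q) * (\<Prod>i\<in>UNIV. M $ Some i $ Some (q i)))) {q. q permutes (UNIV :: 'n set)}"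
  proof (rule sum.cong[OF refl])
    fix q assume "q \<in> {q. q permutes (UNIV :: 'n set)}"
    then have q: "q permutes UNIV" by simp
    have s: "sign (map_permutation UNIV Some q) = sign q"
      by (rule sign_map_permutation) (use q in auto)
    have n: "map_permutation UNIV Some q None = None"
      by (auto simp: map_permutation_def restrict_id_def)
    have sm: "map_permutation UNIV Some q (Some i) = Some (q i)" for i
      by (rule map_permutation_apply) auto
    show "?f (map_permutation UNIV Some q) = M $ None $ None * (of_int (sign q) * (\<Prod>i\<in>UNIV. M $ Some i $ Some (q i)))"
      by (simp add: s n sm prod_option_UNIV algebra_simps)
  qed
  also have "\<dots> = M $ None $ None * det (\<chi> i j. M $ Some i $ Some j)"
    unfolding det_def by (simp add: sum_distrib_left)
  finally show ?thesis .
qed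


lemma proots_pcompose_prod_lin:
  fixes R :: "complex multiset"
  assumes "m \<noteq> 0"
  shows "proots (pcompose (\<Prod>x\<in>#R. [:-x, 1:]) [:b, m:]) = image_mset (\<lambda>w. (w - b)/m) R
         \<and> pcompose (\<Prod>x\<in>#R. [:-x, 1:]) [:b, m:] \<noteq> 0"
proof (induction R)
  case empty
  then show ?case by (simp add: pcompose_1)
next
  case (add x R)
  have e: "pcompose [:-x, 1:] [:b, m:] = smult m [:(b - x)/m, 1:]"
    using assms by (simp add: pcompose_pCons field_simps)
  have nz: "pcompose [:-x, 1:] [:b, m:] \<noteq> 0" using e assms by simp
  have r0: "proots (smult m [:(b - x)/m, 1:]) = {#-((b - x)/m)#}"
    by (subst proots_smult) (use assms in auto)
  have r: "proots (pcompose [:-x, 1:] [:b, m:]) = {#(x - b)/m#}"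
    unfolding e r0 by (metis minus_diff_eq minus_divide_left)
  have p: "pcompose (\<Prod>y\<in>#add_mset x R. [:-y, 1:]) [:b, m:]
     = pcompose [:-x, 1:] [:b, m:] * pcompose (\<Prod>y\<in>#R. [:-y, 1:]) [:b, m:]"
    by (simp only: prod_mset.add_mset image_mset_add_mset pcompose_mult)
  from add.IH have IH1: "proots (pcompose (\<Prod>y\<in>#R. [:-y, 1:]) [:b, m:]) = image_mset (\<lambda>w. (w - b)/m) R"
    and IH2: "pcompose (\<Prod>y\<in>#R. [:-y, 1:]) [:b, m:] \<noteq> 0" by auto
  show ?case
  proof
    show "proots (pcompose (\<Prod>y\<in>#add_mset x R. [:-y, 1:]) [:b, m:]) = image_mset (\<lambda>w. (w - b)/m) (add_mset x R)"
    proof -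
      have "proots (pcompose (\<Prod>y\<in>#add_mset x R. [:-y, 1:]) [:b, m:]) = proots (pcompose [:-x, 1:] [:b, m:] * pcompose (\<Prod>y\<in>#R. [:-y, 1:]) [:b, m:])"
        using p by (rule arg_cong)
      also have "\<dots> = {#(x - b)/m#} + image_mset (\<lambda>w. (w - b)/m) R"
        using proots_mult[OF nz IH2] r IH1 by simp
      finally show ?thesis by simp
    qed
    show "pcompose (\<Prod>y\<in>#add_mset x R. [:-y, 1:]) [:b, m:] \<noteq> 0"
      using p nz IH2 by (metis mult_eq_0_iff)
  qed
qed

lemma proots_pcompose_lin:
  fixes p :: "complex poly"
  assumes "m \<noteq> 0"
  shows "proots (pcompose p [:b, m:]) = image_mset (\<lambda>w. (w - b)/m) (proots p)"
proof (cases "p = 0")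
  case True then show ?thesis by simp
next
  case False
  have "pcompose p [:b, m:] = smult (lead_coeff p) (pcompose (\<Prod>x\<in>#proots p. [:-x, 1:]) [:b, m:])"
    by (subst (1) complex_poly_decompose_multiset[symmetric]) (simp add: pcompose_smult)
  moreover have "lead_coeff p \<noteq> 0" using False by simp
  ultimately show ?thesis using proots_pcompose_prod_lin[OF assms, of "proots p" b] by simp
qed

lemma Sym_entry: "Y \<in> Sym \<Longrightarrow> Y $ i $ j = Y $ j $ i"
proof -
  assume "Y \<in> Sym"
  then have "transpose Y = Y" by (simp add: Sym_def)
  moreover have "transpose Y $ j $ i = Y $ i $ j" by (simp add: transpose_def)
  ultimately show ?thesis by simp
qed

lemma poly_char_poly_c:
  "poly (char_poly_c M) z = det (\<chi> i j. (if i = j then z else 0) - M $ i $ j)"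
  unfolding char_poly_c_def det_poly_eval by (rule arg_cong[where f=det]) (simp add: vec_eq_iff)

lemma det_zero_kernel:
  fixes A :: "'a::field^'n^'n"
  assumes "det A = 0"
  shows "\<exists>x. x \<noteq> 0 \<and> A *v x = 0"
proof -
  have "\<not> invertible A" using assms invertible_det_nz by blast
  then have "\<not> (\<exists>B. B ** A = mat 1)" using invertible_left_inverse by blast
  then show ?thesis using matrix_left_invertible_ker by blast
qed

lemma sym_eig_real:
  fixes Y :: "real^'n^'n"
  assumes Y: "Y \<in> Sym" and z: "poly (char_poly_c (cmat Y)) z = 0"
  shows "Im z = 0"
proof -
  have "det (\<chi> i j. (if i = j then z else 0) - cmat Y $ i $ j) = 0"
    using z by (simp add: poly_char_poly_c)
  then obtain x where x0: "x \<noteq> 0" and x: "(\<chi> i j. (if i = j then z else 0) - cmat Y $ i $ j) *v x = 0"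
    using det_zero_kernel by blast
  have ev: "(\<Sum>j\<in>UNIV. of_real (Y $ i $ j) * x $ j) = z * x $ i" for i
  proof -
    have "((\<chi> i j. (if i = j then z else 0) - cmat Y $ i $ j) *v x) $ i = 0" using x by simp
    then have "(\<Sum>j\<in>UNIV. ((if i = j then z else 0) - of_real (Y $ i $ j)) * x $ j) = 0"
      by (simp add: matrix_vector_mult_def cmat_def)
    moreover have "(\<Sum>j\<in>UNIV. ((if i = j then z else 0) - of_real (Y $ i $ j)) * x $ j)
       = (\<Sum>j\<in>UNIV. (if i = j then z * x $ j else 0)) - (\<Sum>j\<in>UNIV. of_real (Y $ i $ j) * x $ j)"
    proof -
      have "\<And>j. ((if i = j then z else 0) - of_real (Y $ i $ j)) * x $ j = (if i = j then z * x $ j else 0) - of_real (Y $ i $ j) * x $ j"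
        by (simp add: left_diff_distrib)
      then show ?thesis by (simp add: sum_subtractf)
    qed
    moreover have "(\<Sum>j\<in>UNIV. (if i = j then z * x $ j else 0)) = z * x $ i"
      by (simp add: sum.delta)
    ultimately show ?thesis by simp
  qed
  define S where "S = (\<Sum>i\<in>UNIV. \<Sum>j\<in>UNIV. cnj (x $ i) * of_real (Y $ i $ j) * x $ j)"
  have "cnj S = (\<Sum>i\<in>UNIV. \<Sum>j\<in>UNIV. x $ i * of_real (Y $ i $ j) * cnj (x $ j))"
    unfolding S_def by simp
  also have "\<dots> = (\<Sum>j\<in>UNIV. \<Sum>i\<in>UNIV. x $ i * of_real (Y $ i $ j) * cnj (x $ j))"
    by (rule sum.swap)
  also have "\<dots> = S"
    unfolding S_def using Sym_entry[OF Y] by (simp add: algebra_simps)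
  finally have cS: "cnj S = S" .
  have "S = (\<Sum>i\<in>UNIV. cnj (x $ i) * (\<Sum>j\<in>UNIV. of_real (Y $ i $ j) * x $ j))"
    unfolding S_def by (simp add: sum_distrib_left mult.assoc)
  also have "\<dots> = (\<Sum>i\<in>UNIV. cnj (x $ i) * (z * x $ i))"
    by (simp only: ev)
  also have "\<dots> = z * (\<Sum>i\<in>UNIV. cnj (x $ i) * x $ i)"
    by (simp add: sum_distrib_left algebra_simps)
  also have "(\<Sum>i\<in>UNIV. cnj (x $ i) * x $ i) = of_real (\<Sum>i\<in>UNIV. (cmod (x $ i))\<^sup>2)"
  proof -
    have "cnj (x $ i) * x $ i = of_real ((cmod (x $ i))\<^sup>2)" for i
      by (subst complex_norm_square) (rule mult.commute)
    then show ?thesis by (simp add: of_real_sum)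
  qed
  finally have Sz: "S = z * of_real (\<Sum>i\<in>UNIV. (cmod (x $ i))\<^sup>2)" .
  have pos: "(\<Sum>i\<in>UNIV. (cmod (x $ i))\<^sup>2) > 0"
  proof -
    obtain k where "x $ k \<noteq> 0" using x0 by (metis vec_eq_iff zero_index)
    then have "(cmod (x $ k))\<^sup>2 > 0" by simp
    moreover have "(cmod (x $ k))\<^sup>2 \<le> (\<Sum>i\<in>UNIV. (cmod (x $ i))\<^sup>2)"
      by (rule member_le_sum) auto
    ultimately show ?thesis by linarith
  qed
  have "Im S = 0" using arg_cong[OF cS, of Im] by simp
  then have "Im z * (\<Sum>i\<in>UNIV. (cmod (x $ i))\<^sup>2) = 0" using Sz by simp
  then show ?thesis using pos by simp
qed


lemma Arg_1_ii: "Arg (1 + \<i> * of_real r) = arctan r"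
proof (rule Arg_unique')
  show "sqrt (1 + r\<^sup>2) > 0" by (simp add: add_pos_nonneg)
  show "arctan r \<in> {-pi<..pi}" using arctan_bounded[of r] by auto
  have "1 + r\<^sup>2 > 0" by (simp add: add_pos_nonneg)
  then have s: "sqrt (1 + r\<^sup>2) \<noteq> 0" by simp
  show "1 + \<i> * of_real r = rcis (sqrt (1 + r\<^sup>2)) (arctan r)"
    using s by (simp add: complex_eq_iff cos_arctan sin_arctan)
qed

lemma Arg_ii_pos: "a > 0 \<Longrightarrow> Arg (\<i> * of_real a) = pi / 2"
proof (rule Arg_unique')
  assume a: "a > 0"
  then show "a > 0" .
  show "pi / 2 \<in> {-pi<..pi}" using pi_gt_zero by auto
  show "\<i> * of_real a = rcis a (pi / 2)"
    by (simp add: complex_eq_iff)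
qed

definition blk :: "real \<Rightarrow> real^'n^'n \<Rightarrow> real^('n::finite option)^('n option)" where
  "blk a Y = (\<chi> j k. case j of None \<Rightarrow> (case k of None \<Rightarrow> a | Some _ \<Rightarrow> 0)
                   | Some p \<Rightarrow> (case k of None \<Rightarrow> 0 | Some q \<Rightarrow> Y $ p $ q))"

lemma Theta_blk:
  fixes Y :: "real^'n^'n"
  assumes a: "a > 0" and Y: "Y \<in> Sym"
  shows "Theta_tilde (blk a Y) = pi / 2 + tr_arctan Y"
proof -
  define Z :: "complex^('n option)^('n option)" where
    "Z = (\<chi> i j. complex_of_real (In_mat $ i $ j) + \<i> * complex_of_real (blk a Y $ i $ j))"
  define CM where "CM = (\<chi> i j. (if i = j then [:0, 1:] else 0) - [:Z $ i $ j:])"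
  define q :: "complex poly" where "q = [:\<i>, -\<i>:]"
  define cp where "cp = char_poly_c (cmat Y)"
  have "blk a Y $ None $ None \<noteq> 0" using a by (simp add: blk_def)
  then have notS: "blk a Y \<notin> S_set"
    unfolding S_set_def by blast
  have CM0: "CM $ None $ k = 0" if "k \<noteq> None" for k
    using that by (auto simp: CM_def Z_def In_mat_def blk_def split: option.splits)
  have CMNN: "CM $ None $ None = [:-(\<i> * of_real a), 1:]"
    by (simp add: CM_def Z_def In_mat_def blk_def)
  have Nent: "CM $ Some i $ Some j = [:\<i>:] * pcompose ((\<chi> i j. (if i = j then [:0, 1:] else 0) - [:cmat Y $ i $ j:]) $ i $ j) q" for i j
  proof -
    have "poly (CM $ Some i $ Some j) t = poly ([:\<i>:] * pcompose ((\<chi> i j. (if i = j then [:0, 1:] else 0) - [:cmat Y $ i $ j:]) $ i $ j) q) t" for t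
      by (simp add: CM_def Z_def In_mat_def blk_def cmat_def q_def poly_pcompose algebra_simps)
    then show ?thesis using poly_eq_poly_eq_iff by blast
  qed
  define CMY where "CMY = (\<chi> i j. (if i = j then [:0, 1:] else 0) - [:cmat Y $ i $ j:])"
  have e1: "(\<chi> i j. CM $ Some i $ Some j) = (\<chi> i j. [:\<i>:] * (\<chi> i j. pcompose (CMY $ i $ j) q) $ i $ j)"
    unfolding CMY_def by (simp only: Nent vec_lambda_beta)
  have detN: "det (\<chi> i j. CM $ Some i $ Some j) = [:\<i>:] ^ CARD('n) * pcompose cp q"
    unfolding e1 det_scale_entries det_pcompose[symmetric] cp_def char_poly_c_def CMY_def ..
  have cp0: "cp \<noteq> 0"
  proof
    assume "cp = 0"
    then have "poly (char_poly_c (cmat Y)) \<i> = 0" by (simp add: cp_def)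
    then have "Im \<i> = 0" by (rule sym_eig_real[OF Y])
    then show False by simp
  qed
  have pc0: "pcompose cp q \<noteq> 0"
    using cp0 by (simp add: pcompose_eq_0_iff q_def)
  have charZ: "char_poly_c Z = [:-(\<i> * of_real a), 1:] * ([:\<i>:] ^ CARD('n) * pcompose cp q)"
  proof -
    have "det CM = CM $ None $ None * det (\<chi> i j. CM $ Some i $ Some j)"
      by (rule det_block_None) (rule CM0)
    then show ?thesis unfolding char_poly_c_def CM_def[symmetric] CMNN detN .
  qed
  have eig: "eigvals_c Z = {#\<i> * of_real a#} + image_mset (\<lambda>w. (w - \<i>)/(-\<i>)) (proots cp)"
  proof -
    have n1: "[:-(\<i> * of_real a), 1:] \<noteq> 0" by simp
    have n2: "[:\<i>:] ^ CARD('n) \<noteq> (0 :: complex poly)" by simp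
    have n3: "[:\<i>:] ^ CARD('n) * pcompose cp q \<noteq> 0" using n2 pc0 by simp
    have "eigvals_c Z = proots [:-(\<i> * of_real a), 1:] + (proots ([:\<i>:] ^ CARD('n)) + proots (pcompose cp q))"
      unfolding eigvals_c_def charZ proots_mult[OF n1 n3] proots_mult[OF n2 pc0] ..
    also have "proots ([:\<i>:] ^ CARD('n)) = {#}" by (simp add: proots_power)
    also have "proots (pcompose cp q) = image_mset (\<lambda>w. (w - \<i>)/(-\<i>)) (proots cp)"
      unfolding q_def by (rule proots_pcompose_lin) simp
    finally show ?thesis by simp
  qed
  have "Theta_tilde (blk a Y) = sum_mset (image_mset Arg (eigvals_c Z))"
    using notS by (simp add: Theta_tilde_def Z_def)
  also have "\<dots> = Arg (\<i> * of_real a) + sum_mset (image_mset (\<lambda>w. Arg ((w - \<i>)/(-\<i>))) (proots cp))"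
    unfolding eig by (simp add: multiset.map_comp o_def)
  also have "Arg (\<i> * of_real a) = pi / 2" using a by (rule Arg_ii_pos)
  also have "image_mset (\<lambda>w. Arg ((w - \<i>)/(-\<i>))) (proots cp) = image_mset (\<lambda>z. arctan (Re z)) (proots cp)"
  proof (rule image_mset_cong)
    fix w assume "w \<in># proots cp"
    then have "poly cp w = 0" using cp0 by simp
    then have "Im w = 0" unfolding cp_def by (rule sym_eig_real[OF Y])
    then have "(w - \<i>)/(-\<i>) = 1 + \<i> * of_real (Re w)"
      by (simp add: complex_eq_iff field_simps)
    then show "Arg ((w - \<i>)/(-\<i>)) = arctan (Re w)" by (simp only: Arg_1_ii)
  qed
  also have "sum_mset (image_mset (\<lambda>z. arctan (Re z)) (proots cp)) = tr_arctan Y"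
    by (simp add: tr_arctan_def eigvals_c_def cp_def)
  finally show ?thesis .
qed


definition Pr :: "real^('n::finite option) \<Rightarrow> real^'n" where
  "Pr z = (\<chi> i. z $ Some i)"
definition Jm :: "real^'n \<Rightarrow> real^('n::finite option)" where
  "Jm y = (\<chi> j. case j of None \<Rightarrow> 0 | Some i \<Rightarrow> y $ i)"
definition Jn :: "real \<Rightarrow> real^('n::finite option)" where
  "Jn t = (\<chi> j. case j of None \<Rightarrow> t | Some i \<Rightarrow> 0)"
definition emb :: "real \<Rightarrow> real^'n \<Rightarrow> real^('n::finite option)" where
  "emb t y = (\<chi> j. case j of None \<Rightarrow> t | Some i \<Rightarrow> y $ i)"

lemma Pr_nth [simp]: "Pr z $ i = z $ Some i" by (simp add: Pr_def)
lemma Jm_None [simp]: "Jm y $ None = 0" by (simp add: Jm_def)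
lemma Jm_Some [simp]: "Jm y $ Some i = y $ i" by (simp add: Jm_def)
lemma Jn_None [simp]: "Jn t $ None = t" by (simp add: Jn_def)
lemma Jn_Some [simp]: "Jn t $ Some i = 0" by (simp add: Jn_def)
lemma emb_None [simp]: "emb t y $ None = t" by (simp add: emb_def)
lemma emb_Some [simp]: "emb t y $ Some i = y $ i" by (simp add: emb_def)

lemma vec_opt_eqI: "z $ None = w $ None \<Longrightarrow> (\<And>i. z $ Some i = w $ Some i) \<Longrightarrow> z = w"
  by (metis not_None_eq vec_eq_iff)

lemma Pr_emb [simp]: "Pr (emb t y) = y" by (simp add: vec_eq_iff)
lemma Pr_Jm [simp]: "Pr (Jm y) = y" by (simp add: vec_eq_iff)
lemma Pr_Jn [simp]: "Pr (Jn t) = 0" by (simp add: vec_eq_iff)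
lemma emb_Pr: "emb (z $ None) (Pr z) = z" by (rule vec_opt_eqI) auto
lemma emb_eq: "emb t y = Jn t + Jm y" by (rule vec_opt_eqI) auto

lemma inner_opt: "z \<bullet> w = z $ None * w $ None + Pr z \<bullet> Pr w"
  unfolding inner_vec_def by (simp add: sum_option_UNIV)

lemma norm_opt_sq: "(norm z)\<^sup>2 = (z $ None)\<^sup>2 + (norm (Pr z))\<^sup>2"
  unfolding power2_norm_eq_inner inner_opt by (simp add: power2_eq_square)

lemma Pr_diff: "Pr (z - w) = Pr z - Pr w" by (simp add: vec_eq_iff)
lemma emb_diff: "emb t y - emb s x = emb (t - s) (y - x)" by (rule vec_opt_eqI) auto

lemma norm_emb: "norm (emb t y) = sqrt (t\<^sup>2 + (norm y)\<^sup>2)"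
  using norm_opt_sq[of "emb t y"] by (metis Pr_emb emb_None norm_ge_zero real_sqrt_unique)

lemma dist_emb: "dist (emb t y) (emb s x) = sqrt ((t - s)\<^sup>2 + (dist y x)\<^sup>2)"
  by (simp add: dist_norm emb_diff norm_emb)

lemma dist_emb_same_y: "dist (emb t y) (emb s y) = \<bar>t - s\<bar>"
  by (simp add: dist_emb)

lemma dist_emb_same_t: "dist (emb t y) (emb t x) = dist y x"
  by (simp add: dist_emb)

lemma linear_Pr: "bounded_linear Pr"
proof -
  have "linear Pr" by (rule linearI) (simp_all add: vec_eq_iff)
  then show ?thesis by (simp add: linear_conv_bounded_linear)
qed

lemma linear_Jm: "bounded_linear Jm"
proof -
  have "linear Jm" by (rule linearI) (simp_all add: Jm_def vec_eq_iff split: option.splits)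
  then show ?thesis by (simp add: linear_conv_bounded_linear)
qed

lemma linear_Jn: "bounded_linear Jn"
proof -
  have "linear Jn" by (rule linearI) (simp_all add: Jn_def vec_eq_iff split: option.splits)
  then show ?thesis by (simp add: linear_conv_bounded_linear)
qed

lemma continuous_on_emb2: "continuous_on S (\<lambda>p. emb (fst p) (snd p))"
  unfolding emb_eq
  by (intro continuous_intros bounded_linear.continuous_on[OF linear_Jn] bounded_linear.continuous_on[OF linear_Jm])

lemma continuous_on_emb: "continuous_on S (emb t)"
  unfolding emb_eq
  by (intro continuous_intros bounded_linear.continuous_on[OF linear_Jm])

lemma continuous_on_Pr: "continuous_on S Pr"
  by (intro bounded_linear.continuous_on[OF linear_Pr] continuous_intros)

lemma blk_None_None [simp]: "blk a Y $ None $ None = a" by (simp add: blk_def)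
lemma blk_None_Some [simp]: "blk a Y $ None $ Some i = 0" by (simp add: blk_def)
lemma blk_Some_None [simp]: "blk a Y $ Some i $ None = 0" by (simp add: blk_def)
lemma blk_Some_Some [simp]: "blk a Y $ Some i $ Some j = Y $ i $ j" by (simp add: blk_def)

lemma blk_row_Some: "blk a Y $ Some i = Jm (Y $ i)" by (rule vec_opt_eqI) auto

lemma blk_mult: "blk a Y *v h = Jn (a * h $ None) + Jm (Y *v Pr h)"
  by (rule vec_opt_eqI) (simp_all add: matrix_vector_mult_def sum_option_UNIV)

lemma blk_uminus: "- blk a Y = blk (-a) (-Y)"
  by (rule vec_opt_eqI; rule vec_opt_eqI) simp_all

lemma blk_diff: "blk a Y - blk a Y' = blk 0 (Y - Y')"
  by (rule vec_opt_eqI; rule vec_opt_eqI) simp_all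

lemma norm_Jm: "norm (Jm y) = norm y"
  using norm_opt_sq[of "Jm y"] by (simp add: power2_eq_iff_nonneg)

lemma norm_blk0: "norm (blk 0 D) = norm D"
proof -
  have "(norm (blk 0 D))\<^sup>2 = (norm D)\<^sup>2"
    unfolding norm_vec_def L2_set_def
    by (simp add: sum_option_UNIV blk_row_Some norm_Jm sum_nonneg)
  then show ?thesis by (simp add: power2_eq_iff_nonneg)
qed

lemma blk_Sym:
  assumes "Y \<in> Sym" shows "blk a Y \<in> Sym"
proof -
  have "transpose (blk a Y) = blk a Y"
    by (rule vec_opt_eqI; rule vec_opt_eqI) (simp_all add: transpose_def Sym_entry[OF assms])
  then show ?thesis by (simp add: Sym_def)
qed

lemma Sym_uminus: "Y \<in> Sym \<Longrightarrow> - Y \<in> Sym"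
  unfolding Sym_def by (simp add: vec_eq_iff transpose_def)

lemma dual_blk:
  fixes Hy :: "real^'n^'n"
  assumes M: "M > 0" and Hd: "Hy \<in> dual_set (Fc (c - pi / 2))"
  shows "blk (-2*M) Hy \<in> dual_set (Fpar c)"
proof -
  have HS: "Hy \<in> Sym" using Hd by (simp add: dual_set_def)
  have notint: "- Hy \<notin> (top_of_set Sym) interior_of (Fc (c - pi / 2))"
  proof
    assume "- Hy \<in> (top_of_set Sym) interior_of (Fc (c - pi / 2))"
    then have "Hy \<in> uminus ` ((top_of_set Sym) interior_of (Fc (c - pi / 2)))"
      by (metis minus_minus image_eqI)
    then show False using Hd by (simp add: dual_set_def)
  qed
  have "blk (-2*M) Hy \<notin> uminus ` ((top_of_set Sym) interior_of (Fpar c))"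
  proof
    assume "blk (-2*M) Hy \<in> uminus ` ((top_of_set Sym) interior_of (Fpar c))"
    then obtain W where W: "W \<in> (top_of_set Sym) interior_of (Fpar c)" and eW: "blk (-2*M) Hy = - W"
      by auto
    have Weq: "W = blk (2*M) (- Hy)" using eW blk_uminus[of "-2*M" Hy] by (metis minus_minus mult_minus_left)
    from W obtain T where T: "openin (top_of_set Sym) T" "W \<in> T" "T \<subseteq> Fpar c"
      by (auto simp: interior_of_def)
    then obtain Ob where Ob: "open Ob" "T = Sym \<inter> Ob" by (auto simp: openin_open)
    then obtain r where r: "r > 0" "ball W r \<subseteq> Ob" using T(2) by (meson IntD2 open_contains_ball)
    have "- Hy \<in> (top_of_set Sym) interior_of (Fc (c - pi / 2))"
      unfolding interior_of_def
    proof (intro CollectI exI conjI)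
      show "openin (top_of_set Sym) (Sym \<inter> ball (- Hy) r)" by (rule openin_open_Int) simp
      show "- Hy \<in> Sym \<inter> ball (- Hy) r" using r HS Sym_uminus by auto
      show "Sym \<inter> ball (- Hy) r \<subseteq> Fc (c - pi / 2)"
      proof
        fix Y' assume Y': "Y' \<in> Sym \<inter> ball (- Hy) r"
        have "dist (blk (2*M) Y') W = dist Y' (- Hy)"
          unfolding Weq dist_norm blk_diff norm_blk0 ..
        then have "blk (2*M) Y' \<in> ball W r" using Y' by (simp add: dist_commute)
        then have "blk (2*M) Y' \<in> T" using Ob r Y' blk_Sym by auto
        then have "blk (2*M) Y' \<in> Fpar c" using T by auto
        then have "Theta_tilde (blk (2*M) Y') \<ge> c" by (simp add: Fpar_def)
        moreover have "Theta_tilde (blk (2*M) Y') = pi / 2 + tr_arctan Y'"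
          by (rule Theta_blk) (use M Y' in auto)
        ultimately show "Y' \<in> Fc (c - pi / 2)" using Y' by (simp add: Fc_def)
      qed
    qed
    with notint show False by contradiction
  qed
  moreover have "blk (-2*M) Hy \<in> Sym" by (rule blk_Sym[OF HS])
  ultimately show ?thesis by (simp add: dual_set_def)
qed


lemma Pr_add: "Pr (z + w) = Pr z + Pr w" by (simp add: vec_eq_iff)

lemma usc_open:
  assumes X: "open X" and u: "usc_on X u" and h: "continuous_on X h"
  shows "open {z\<in>X. u z < ereal (h z)}"
  unfolding open_contains_ball
proof (intro ballI)
  fix z assume z: "z \<in> {z\<in>X. u z < ereal (h z)}"
  then have zX: "z \<in> X" and uz: "u z < ereal (h z)" by auto
  obtain r where r1: "u z < ereal r" and r2: "ereal r < ereal (h z)" using ereal_dense2[OF uz] by blast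
  have "\<forall>\<^sub>F y in at z within X. u y < ereal r" using u zX r1 by (simp add: usc_on_def)
  then obtain d1 where d1: "d1 > 0" "\<forall>y\<in>X. y \<noteq> z \<and> dist y z < d1 \<longrightarrow> u y < ereal r"
    by (auto simp: eventually_at)
  have "h z - r > 0" using r2 by simp
  then obtain d2 where d2: "d2 > 0" "\<forall>y\<in>X. dist y z < d2 \<longrightarrow> dist (h y) (h z) < h z - r"
    using h zX unfolding continuous_on_iff by blast
  obtain d3 where d3: "d3 > 0" "ball z d3 \<subseteq> X" using X zX open_contains_ball by blast
  define d where "d = min d1 (min d2 d3)"
  have "d > 0" using d1 d2 d3 by (simp add: d_def)
  moreover have "ball z d \<subseteq> {z\<in>X. u z < ereal (h z)}"
  proof
    fix y assume y: "y \<in> ball z d"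
    then have yX: "y \<in> X" using d3 by (auto simp: d_def)
    show "y \<in> {z\<in>X. u z < ereal (h z)}"
    proof (cases "y = z")
      case True then show ?thesis using z by simp
    next
      case False
      have dy: "dist y z < d" using y by (simp add: dist_commute)
      have "u y < ereal r" using d1 False yX dy by (auto simp: d_def)
      moreover have "dist (h y) (h z) < h z - r" using d2 yX dy by (auto simp: d_def)
      then have "r < h y" by (simp add: dist_real_def abs_less_iff)
      ultimately have "u y < ereal (h y)" using less_trans by fastforce
      then show ?thesis using yX by simp
    qed
  qed
  ultimately show "\<exists>e>0. ball z e \<subseteq> {z\<in>X. u z < ereal (h z)}" by blast
qed

lemma usc_bdd:
  assumes X: "open X" and u: "usc_on X u" and fin: "\<forall>x\<in>X. u x < \<infinity>" and h: "continuous_on X h"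
    and K: "compact K" "K \<subseteq> X"
  shows "\<exists>B. \<forall>z\<in>K. u z < ereal (h z + B)"
proof -
  have op: "open {z\<in>X. u z < ereal (h z + real n)}" for n
    by (rule usc_open[OF X u]) (intro continuous_intros h)
  have cov: "K \<subseteq> (\<Union>n\<in>UNIV. {z\<in>X. u z < ereal (h z + real n)})"
  proof
    fix z assume zK: "z \<in> K"
    then have zX: "z \<in> X" using K by auto
    then have "u z < \<infinity>" using fin by auto
    then obtain s where s: "u z < ereal s" using ereal_dense2 by blast
    obtain n :: nat where n: "s - h z < real n" using reals_Archimedean2 by blast
    then have "s < h z + real n" by simp
    then have "ereal s < ereal (h z + real n)" by simp
    then have "u z < ereal (h z + real n)" using s by (rule less_trans[rotated])
    then show "z \<in> (\<Union>n\<in>UNIV. {z\<in>X. u z < ereal (h z + real n)})" using zX by blast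
  qed
  obtain C where C: "C \<subseteq> UNIV" "finite C" "K \<subseteq> (\<Union>n\<in>C. {z\<in>X. u z < ereal (h z + real n)})"
    using compactE_image[OF K(1) op cov] by blast
  define B where "B = real (Max (insert 0 C))"
  have "\<forall>z\<in>K. u z < ereal (h z + B)"
  proof
    fix z assume "z \<in> K"
    then obtain n where n: "n \<in> C" "u z < ereal (h z + real n)" using C by blast
    have "n \<le> Max (insert 0 C)" using n C by simp
    then have "real n \<le> B" by (simp add: B_def)
    then have "ereal (h z + real n) \<le> ereal (h z + B)" by simp
    then show "u z < ereal (h z + B)" by (rule order_less_le_trans[OF n(2)])
  qed
  then show ?thesis by blast
qed

lemma usc_slice:
  assumes f: "usc_on X f" and DX: "\<forall>y\<in>D. emb t y \<in> X"
  shows "usc_on D (\<lambda>y. f (emb t y))"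
  unfolding usc_on_def
proof (intro ballI allI impI)
  fix y c assume yD: "y \<in> D" and fy: "f (emb t y) < c"
  have "\<forall>\<^sub>F z in at (emb t y) within X. f z < c" using f DX yD fy by (simp add: usc_on_def)
  then obtain d where d: "d > 0" "\<forall>z\<in>X. z \<noteq> emb t y \<and> dist z (emb t y) < d \<longrightarrow> f z < c"
    by (auto simp: eventually_at)
  show "\<forall>\<^sub>F y' in at y within D. f (emb t y') < c"
    unfolding eventually_at
  proof (intro exI conjI ballI impI)
    show "d > 0" by fact
    fix y' assume y'D: "y' \<in> D" and h: "y' \<noteq> y \<and> dist y' y < d"
    have "emb t y' \<noteq> emb t y" using h by (metis Pr_emb)
    moreover have "dist (emb t y') (emb t y) < d" using h by (simp add: dist_emb_same_t)
    ultimately show "f (emb t y') < c" using d DX y'D by blast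
  qed
qed

lemma C2_V:
  assumes C2: "C2_hess D v H" and PX: "\<forall>z\<in>X. Pr z \<in> D"
  shows "C2_hess X (\<lambda>z. v (Pr z) - M * ((z $ None - t0) * (z $ None - t0))) (\<lambda>z. blk (-2*M) (H (Pr z)))"
proof -
  obtain g where g1: "\<forall>x\<in>D. (v has_derivative (\<lambda>h. g x \<bullet> h)) (at x)"
    and g2: "\<forall>x\<in>D. (g has_derivative (\<lambda>h. H x *v h)) (at x)" and g3: "continuous_on D H"
    using C2 unfolding C2_hess_def by blast
  define G where "G z = Jm (g (Pr z)) + Jn (-2*M*(z $ None - t0))" for z
  have dPr: "(Pr has_derivative Pr) (at z)" for z by (rule bounded_linear_imp_has_derivative[OF linear_Pr])
  have dN: "((\<lambda>z. z $ None) has_derivative (\<lambda>h. h $ None)) (at z)" for z :: "real^('a option)"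
    by (rule bounded_linear_imp_has_derivative[OF bounded_linear_vec_nth])
  have dlin: "((\<lambda>z. z $ None - t0) has_derivative (\<lambda>h. h $ None - 0)) (at z)" for z :: "real^('a option)"
    by (rule has_derivative_diff[OF dN has_derivative_const])
  have D1: "((\<lambda>z. v (Pr z) - M * ((z $ None - t0) * (z $ None - t0))) has_derivative (\<lambda>h. G z \<bullet> h)) (at z)"
    if zX: "z \<in> X" for z
  proof -
    have dv: "((\<lambda>z. v (Pr z)) has_derivative (\<lambda>h. g (Pr z) \<bullet> Pr h)) (at z)"
      by (rule has_derivative_compose[OF dPr]) (use g1 PX zX in auto)
    have dq: "((\<lambda>z. M * ((z $ None - t0) * (z $ None - t0))) has_derivative
        (\<lambda>h. M * ((z $ None - t0) * (h $ None - 0) + (h $ None - 0) * (z $ None - t0)) + 0 * ((z $ None - t0) * (z $ None - t0)))) (at z)"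
      by (rule has_derivative_mult[OF has_derivative_const has_derivative_mult[OF dlin dlin]])
    show ?thesis
      by (rule has_derivative_eq_rhs[OF has_derivative_diff[OF dv dq]])
         (simp add: fun_eq_iff G_def inner_opt Pr_add algebra_simps)
  qed
  have D2: "(G has_derivative (\<lambda>h. blk (-2*M) (H (Pr z)) *v h)) (at z)" if zX: "z \<in> X" for z
  proof -
    have dg: "((\<lambda>z. g (Pr z)) has_derivative (\<lambda>h. H (Pr z) *v Pr h)) (at z)"
      by (rule has_derivative_compose[OF dPr]) (use g2 PX zX in auto)
    have dJm: "((\<lambda>z. Jm (g (Pr z))) has_derivative (\<lambda>h. Jm (H (Pr z) *v Pr h))) (at z)"
      by (rule has_derivative_compose[OF dg bounded_linear_imp_has_derivative[OF linear_Jm]])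
    have dl: "((\<lambda>z. (-2*M) * (z $ None - t0)) has_derivative (\<lambda>h. (-2*M) * (h $ None - 0) + 0 * (z $ None - t0))) (at z)"
      by (rule has_derivative_mult[OF has_derivative_const dlin])
    have dJn: "((\<lambda>z. Jn ((-2*M) * (z $ None - t0))) has_derivative (\<lambda>h. Jn ((-2*M) * (h $ None - 0) + 0 * (z $ None - t0)))) (at z)"
      by (rule has_derivative_compose[OF dl bounded_linear_imp_has_derivative[OF linear_Jn]])
    have Geq: "G = (\<lambda>z. Jm (g (Pr z)) + Jn ((-2*M) * (z $ None - t0)))" by (simp add: fun_eq_iff G_def)
    have "(G has_derivative (\<lambda>h. Jm (H (Pr z) *v Pr h) + Jn ((-2*M) * (h $ None - 0) + 0 * (z $ None - t0)))) (at z)"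
      unfolding Geq by (rule has_derivative_add[OF dJm dJn])
    then show ?thesis
      by (rule has_derivative_eq_rhs) (simp add: blk_mult fun_eq_iff add.commute)
  qed
  have D3: "continuous_on X (\<lambda>z. blk (-2*M) (H (Pr z)))"
  proof -
    have cH: "continuous_on X (\<lambda>z. H (Pr z))"
      by (rule continuous_on_compose2[OF g3 continuous_on_Pr]) (use PX in auto)
    have cHe: "continuous_on X (\<lambda>z. H (Pr z) $ p $ q)" for p q
      by (intro bounded_linear.continuous_on[OF bounded_linear_vec_nth] cH)
    show ?thesis
      unfolding blk_def
      apply (intro continuous_on_vec_lambda)
      subgoal for j k by (cases j; cases k) (simp_all add: cHe)
      done
  qed
  show ?thesis unfolding C2_hess_def using D1 D2 D3 by blast
qed


lemma ereal_aux1: "x + ereal p \<le> ereal q \<Longrightarrow> e > 0 \<Longrightarrow> x < ereal (q - p + e)"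
  by (cases x) auto

lemma ereal_aux2: "x < ereal p \<Longrightarrow> p + q \<le> r \<Longrightarrow> x + ereal q \<le> ereal r"
  by (cases x) auto

lemma open_X:
  assumes "open D"
  shows "open {x :: real^('n::finite option). 0 < x $ None \<and> x $ None < 1 \<and> Pr x \<in> D}"
proof -
  have c: "continuous_on UNIV (\<lambda>x :: real^('n option). x $ None)"
    by (rule bounded_linear.continuous_on[OF bounded_linear_vec_nth continuous_on_id])
  have "{x :: real^('n option). 0 < x $ None \<and> x $ None < 1 \<and> Pr x \<in> D}
      = {x. 0 < x $ None} \<inter> {x. x $ None < 1} \<inter> Pr -` D" by auto
  also have "open \<dots>"
    by (intro open_Int open_Collect_less c continuous_on_const open_vimage assms continuous_on_Pr)
  finally show ?thesis .
qed


theorem lemma9p1: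
  fixes D :: "(real^'n) set" and u :: "real^('n option) \<Rightarrow> ereal" and c t0 :: real
  assumes "open D" and "connected D" and "D \<noteq> {}"
    and "\<bar>c\<bar> < (real CARD('n) + 1) * pi / 2"
    and "u \<in> F_class (Fpar c) {x. 0 < x $ None \<and> x $ None < 1 \<and> (\<chi> i. x $ Some i) \<in> D}"
    and "0 < t0" and "t0 < 1"
  shows "(\<lambda>y. u (\<chi> j. case j of None \<Rightarrow> t0 | Some i \<Rightarrow> y $ i)) \<in> F_class (Fc (c - pi / 2)) D"
proof -
  define X where "X = {x :: real^('n option). 0 < x $ None \<and> x $ None < 1 \<and> Pr x \<in> D}"
  have Xeq: "{x. 0 < x $ None \<and> x $ None < 1 \<and> (\<chi> i. x $ Some i) \<in> D} = X"
    by (simp add: X_def Pr_def)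
  have uF: "u \<in> F_class (Fpar c) X" using assms(5) Xeq by simp
  then have ufin: "\<forall>x\<in>X. u x < \<infinity>" and uusc: "usc_on X u"
    and utest: "\<And>v H. C2_hess X v H \<Longrightarrow> (\<forall>x\<in>X. H x \<in> dual_set (Fpar c)) \<Longrightarrow> subaffine X (\<lambda>x. u x + ereal (v x))"
    by (auto simp: F_class_def)
  have slice: "(\<lambda>y. u (\<chi> j. case j of None \<Rightarrow> t0 | Some i \<Rightarrow> y $ i)) = (\<lambda>y. u (emb t0 y))"
    by (simp add: emb_def)
  have embX: "\<forall>y\<in>D. emb t0 y \<in> X" using assms(6,7) by (simp add: X_def)
  have PX: "\<forall>z\<in>X. Pr z \<in> D" by (simp add: X_def)
  have Xopen: "open X" unfolding X_def by (rule open_X[OF assms(1)])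
  show ?thesis unfolding slice F_class_def
  proof (intro CollectI conjI allI impI)
    show "\<forall>x\<in>D. u (emb t0 x) < \<infinity>" using embX ufin by auto
    show "usc_on D (\<lambda>y. u (emb t0 y))" by (rule usc_slice[OF uusc embX])
    fix v H assume vH: "C2_hess D v H \<and> (\<forall>x\<in>D. H x \<in> dual_set (Fc (c - pi / 2)))"
    define VV where "VV M z = v (Pr z) - M * ((z $ None - t0) * (z $ None - t0))" for M z
    have sub: "subaffine X (\<lambda>z. u z + ereal (VV M z))" if M: "M > 0" for M
    proof -
      have "C2_hess X (\<lambda>z. v (Pr z) - M * ((z $ None - t0) * (z $ None - t0))) (\<lambda>z. blk (-2*M) (H (Pr z)))"
        by (rule C2_V) (use vH PX in auto)
      then have "C2_hess X (VV M) (\<lambda>z. blk (-2*M) (H (Pr z)))"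
        by (simp add: VV_def[abs_def])
      moreover have "\<forall>z\<in>X. blk (-2*M) (H (Pr z)) \<in> dual_set (Fpar c)"
        using dual_blk[OF M] vH PX by auto
      ultimately show ?thesis by (rule utest)
    qed
    have VV0: "VV M (emb t0 y) = v y" for M y by (simp add: VV_def)
    obtain gv where gv: "\<forall>x\<in>D. (v has_derivative (\<lambda>h. gv x \<bullet> h)) (at x)"
      using vH unfolding C2_hess_def by blast
    have vcont: "continuous_on D v"
      using gv has_derivative_continuous continuous_at_imp_continuous_on by blast
    show "subaffine D (\<lambda>y. u (emb t0 y) + ereal (v y))"
      unfolding subaffine_def
    proof (intro conjI allI impI)
      have "usc_on X (\<lambda>z. u z + ereal (VV 1 z))" using sub[of 1] by (simp add: subaffine_def)
      from usc_slice[OF this embX] show "usc_on D (\<lambda>y. u (emb t0 y) + ereal (v y))"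
        by (simp add: VV0)
    next
      fix K a assume Ka: "compact K \<and> K \<subseteq> D \<and> affine_fun a \<and> (\<forall>x\<in>frontier K. u (emb t0 x) + ereal (v x) \<le> ereal (a x))"
      then have K: "compact K" "K \<subseteq> D" and aff: "affine_fun a"
        and bd: "\<forall>x\<in>frontier K. u (emb t0 x) + ereal (v x) \<le> ereal (a x)" by auto
      obtain b c0 where ab: "\<forall>x. a x = b \<bullet> x + c0" using aff unfolding affine_fun_def by blast
      have aeq: "a = (\<lambda>x. b \<bullet> x + c0)" using ab by (simp add: fun_eq_iff)
      have acont: "continuous_on S a" for S unfolding aeq by (intro continuous_intros)
      have vPcont: "continuous_on X (\<lambda>z. v (Pr z))"
        by (rule continuous_on_compose2[OF vcont continuous_on_Pr]) (use PX in auto)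
      have aPcont: "continuous_on X (\<lambda>z. a (Pr z))"
        by (rule continuous_on_compose2[OF acont continuous_on_Pr]) auto
      have fK: "frontier K \<subseteq> K" using K(1) compact_imp_closed frontier_subset_closed by blast
      show "\<forall>x\<in>K. u (emb t0 x) + ereal (v x) \<le> ereal (a x)"
      proof
        fix x0 assume x0: "x0 \<in> K"
        show "u (emb t0 x0) + ereal (v x0) \<le> ereal (a x0)"
        proof (rule ereal_le_epsilon2)
          fix e :: real assume e: "e > 0"
          define h where "h z = a (Pr z) - v (Pr z) + e" for z
          have hcont: "continuous_on X h" unfolding h_def by (intro continuous_intros aPcont vPcont)
          define U where "U = {z\<in>X. u z < ereal (h z)}"
          have Uopen: "open U" unfolding U_def by (rule usc_open[OF Xopen uusc hcont])
          have S0c: "compact (emb t0 ` frontier K)"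
            by (rule compact_continuous_image[OF continuous_on_emb compact_frontier[OF K(1)]])
          have S0U: "emb t0 ` frontier K \<subseteq> U"
          proof
            fix z assume "z \<in> emb t0 ` frontier K"
            then obtain y where y: "y \<in> frontier K" "z = emb t0 y" by blast
            have "y \<in> D" using y fK K by auto
            then have "z \<in> X" using embX y by auto
            moreover have "u z < ereal (h z)"
              using ereal_aux1[OF bd[rule_format, OF y(1)] e] y by (simp add: h_def)
            ultimately show "z \<in> U" by (simp add: U_def)
          qed
          obtain \<epsilon> where eps: "\<epsilon> > 0" "(\<Union>x\<in>emb t0 ` frontier K. ball x \<epsilon>) \<subseteq> U"
            using compact_subset_open_imp_ball_epsilon_subset[OF S0c Uopen S0U] by blast
          define \<delta> where "\<delta> = min (\<epsilon>/2) (min (t0/2) ((1-t0)/2))"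
          have d1: "\<delta> \<le> \<epsilon>/2" and d2: "\<delta> \<le> t0/2" and d3: "\<delta> \<le> (1-t0)/2"
            unfolding \<delta>_def by linarith+
          have dpos: "\<delta> > 0" using eps assms(6,7) by (simp add: \<delta>_def)
          have deps: "\<delta> < \<epsilon>" using d1 eps by linarith
          have dt0: "0 < t0 - \<delta>" using d2 assms(6) by linarith
          have dt1: "t0 + \<delta> < 1" using d3 assms(7) by (simp add: field_simps)
          define K' where "K' = (\<lambda>p. emb (fst p) (snd p)) ` ({t0-\<delta>..t0+\<delta>} \<times> K)"
          have K'c: "compact K'" unfolding K'_def
            by (rule compact_continuous_image[OF continuous_on_emb2 compact_Times[OF compact_Icc K(1)]])
          have memK': "z \<in> K' \<longleftrightarrow> \<bar>z $ None - t0\<bar> \<le> \<delta> \<and> Pr z \<in> K" for z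
          proof
            assume "z \<in> K'"
            then obtain t y where "t \<in> {t0-\<delta>..t0+\<delta>}" "y \<in> K" "z = emb t y" by (auto simp: K'_def)
            then show "\<bar>z $ None - t0\<bar> \<le> \<delta> \<and> Pr z \<in> K" by auto
          next
            assume h: "\<bar>z $ None - t0\<bar> \<le> \<delta> \<and> Pr z \<in> K"
            then have "(z $ None, Pr z) \<in> {t0-\<delta>..t0+\<delta>} \<times> K" by auto
            then have "emb (z $ None) (Pr z) \<in> K'" unfolding K'_def by (metis (no_types, lifting) fst_conv snd_conv image_eqI)
            then show "z \<in> K'" by (simp add: emb_Pr)
          qed
          have K'X: "K' \<subseteq> X"
          proof
            fix z assume "z \<in> K'"
            then have "\<bar>z $ None - t0\<bar> \<le> \<delta>" "Pr z \<in> K" using memK' by auto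
            then show "z \<in> X" using dt0 dt1 K(2) by (auto simp: X_def abs_le_iff)
          qed
          have avc: "continuous_on X (\<lambda>z. a (Pr z) - v (Pr z))" by (intro continuous_intros aPcont vPcont)
          obtain B where B: "\<forall>z\<in>K'. u z < ereal ((a (Pr z) - v (Pr z)) + B)"
            using usc_bdd[OF Xopen uusc ufin avc K'c K'X] by blast
          define M where "M = \<bar>B\<bar> / (\<delta> * \<delta>) + 1"
          have Mpos: "M > 0" using dpos by (simp add: M_def add_nonneg_pos)
          have MB: "M * (\<delta> * \<delta>) \<ge> B"
          proof -
            have "M * (\<delta> * \<delta>) = \<bar>B\<bar> + \<delta> * \<delta>" using dpos by (simp add: M_def field_simps)
            then show ?thesis by (smt (verit) mult_pos_pos dpos)
          qed
          define A where "A z = a (Pr z) + e" for z :: "real^('n option)"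
          have affA: "affine_fun A"
            unfolding affine_fun_def
          proof (intro exI allI)
            fix z :: "real^('n option)"
            show "A z = Jm b \<bullet> z + (c0 + e)" by (simp add: A_def ab inner_opt)
          qed
          have frontK': "\<forall>z\<in>frontier K'. u z + ereal (VV M z) \<le> ereal (A z)"
          proof
            fix z assume zf: "z \<in> frontier K'"
            then have zK': "z \<in> K'" using K'c compact_imp_closed frontier_subset_closed by blast
            then have zt: "\<bar>z $ None - t0\<bar> \<le> \<delta>" and zy: "Pr z \<in> K" using memK' by auto
            have sq: "(z $ None - t0) * (z $ None - t0) = \<bar>z $ None - t0\<bar> * \<bar>z $ None - t0\<bar>"
              by (simp add: abs_mult_self_eq)
            show "u z + ereal (VV M z) \<le> ereal (A z)"
            proof (cases "\<bar>z $ None - t0\<bar> = \<delta>")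
              case True
              have "u z < ereal ((a (Pr z) - v (Pr z)) + B)" using B zK' by auto
              moreover have "(a (Pr z) - v (Pr z)) + B + VV M z \<le> A z"
                using True MB e by (simp add: VV_def A_def sq)
              ultimately show ?thesis by (rule ereal_aux2)
            next
              case False
              then have zlt: "\<bar>z $ None - t0\<bar> < \<delta>" using zt by simp
              have yf: "Pr z \<in> frontier K"
              proof (rule ccontr)
                assume "Pr z \<notin> frontier K"
                then have yi: "Pr z \<in> interior K"
                  using zy closure_subset unfolding frontier_def by blast
                define W where "W = {w :: real^('n option). \<bar>w $ None - t0\<bar> < \<delta>} \<inter> Pr -` interior K"
                have "open W"
                proof -
                  have c: "continuous_on UNIV (\<lambda>w :: real^('n option). \<bar>w $ None - t0\<bar>)"
                    by (intro continuous_intros bounded_linear.continuous_on[OF bounded_linear_vec_nth continuous_on_id])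
                  show ?thesis unfolding W_def
                    by (intro open_Int open_Collect_less c continuous_on_const open_vimage open_interior continuous_on_Pr)
                qed
                moreover have "z \<in> W" using zlt yi by (simp add: W_def)
                moreover have "W \<subseteq> K'" using memK' interior_subset by (force simp: W_def)
                ultimately have "z \<in> interior K'" by (meson interior_maximal subsetD)
                then show False using zf by (simp add: frontier_def)
              qed
              have "dist (emb t0 (Pr z)) z = \<bar>z $ None - t0\<bar>"
                using dist_emb_same_y[of t0 "Pr z" "z $ None"] by (simp add: emb_Pr dist_commute abs_minus_commute)
              then have "z \<in> ball (emb t0 (Pr z)) \<epsilon>" using zlt deps by simp
              then have "z \<in> U" using eps yf by blast
              then have "u z < ereal (h z)" by (simp add: U_def)
              moreover have "h z + VV M z \<le> A z"
              proof -
                have "0 \<le> M * ((z $ None - t0) * (z $ None - t0))" using Mpos by simp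
                then show ?thesis by (simp add: h_def VV_def A_def)
              qed
              ultimately show ?thesis by (rule ereal_aux2)
            qed
          qed
          have "\<forall>z\<in>K'. u z + ereal (VV M z) \<le> ereal (A z)"
            using sub[OF Mpos] K'c K'X affA frontK' unfolding subaffine_def by blast
          moreover have "emb t0 x0 \<in> K'" using memK' x0 dpos by simp
          ultimately have "u (emb t0 x0) + ereal (VV M (emb t0 x0)) \<le> ereal (A (emb t0 x0))" by blast
          then show "u (emb t0 x0) + ereal (v x0) \<le> ereal (a x0) + ereal e"
            by (simp add: VV0 A_def)
        qed
      qed
    qed
  qed
qed


end
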